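(* Let $U\colon\mathbb R\to\mathbb R$ be given by $U(x)=-e^{-x}$ for $x\ge0$ and $U(x)=x-1$ for $x<0$. For $\gamma>0$ and a real random variable $X$ let $\mu_\gamma(X):=-\tfrac1\gamma U^{-1}(\mathbb E[U(\gamma X)])$ and $\alpha(X):=\sup\{\gamma>0:\mu_\gamma(X)\le0\}$ (with $\sup\emptyset:=0$). Let $\lambda\in\mathbb R$, $m>\lambda$, let $(r_t)_{t\in\mathbb N}$ be i.i.d. $N(m,1)$ and $S_T:=\sum_{t=1}^T(r_t-\lambda)$. Then for every $\gamma>0$, $\mathbb E[U(\gamma S_T)]\to0$ as $T\to\infty$; consequently $\liminf_{T\to\infty}\alpha(S_T)=\infty$.
   Context: $U$ is concave, strictly increasing, bounded above by $0$ with $\lim_{x\to\infty}U(x)=0$ and $U(0)=-1$; $U^{-1}$ denotes its inverse on its range $(-\infty,0)$. *)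

theory Defs
  imports "HOL-Probability.Probability"
begin

definition U :: "real \<Rightarrow> real" where
  "U x = (if 0 \<le> x then - exp (- x) else x - 1)"

text \<open>Inverse of U on its range (-infinity, 0).\<close>
definition Uinv :: "real \<Rightarrow> real" where
  "Uinv y = the_inv_into UNIV U y"

definition mu :: "'a measure \<Rightarrow> real \<Rightarrow> ('a \<Rightarrow> real) \<Rightarrow> real" where
  "mu M \<gamma> X = - (1 / \<gamma>) * Uinv (prob_space.expectation M (\<lambda>\<omega>. U (\<gamma> * X \<omega>)))"

definition alpha :: "'a measure \<Rightarrow> ('a \<Rightarrow> real) \<Rightarrow> ereal" where
  "alpha M X = (if {\<gamma>. 0 < \<gamma> \<and> mu M \<gamma> X \<le> 0} = {} then 0
                else Sup (ereal ` {\<gamma>. 0 < \<gamma> \<and> mu M \<gamma> X \<le> 0}))"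

end

theory Submission imports Defs begin

lemma U_neg: "U x < 0" by (auto simp: U_def)

lemma U_inj: "inj U"
proof (rule injI)
  fix x y assume "U x = U y"
  thus "x = y"
  proof -
    have a: "- exp (- z) \<ge> -1" if "0 \<le> z" for z::real using that by simp
    show ?thesis
    proof (cases "0 \<le> x"; cases "0 \<le> y")
      assume "0 \<le> x" "0 \<le> y" thus ?thesis using \<open>U x = U y\<close> by (simp add: U_def)
    next
      assume "0 \<le> x" "\<not> 0 \<le> y" thus ?thesis using \<open>U x = U y\<close> a[of x] by (simp add: U_def)
    next
      assume h: "\<not> 0 \<le> x" "0 \<le> y"
      hence "U x = x - 1" "U y = - exp (-y)" by (simp_all add: U_def)
      thus ?thesis using \<open>U x = U y\<close> a[OF h(2)] h(1) by linarith
    next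
      assume "\<not> 0 \<le> x" "\<not> 0 \<le> y" thus ?thesis using \<open>U x = U y\<close> by (simp add: U_def)
    qed
  qed
qed

lemma Uinv_nonneg: assumes "-1 \<le> y" "y < 0" shows "0 \<le> Uinv y"
proof -
  define x where "x = - ln (-y)"
  have x0: "0 \<le> x" using assms by (simp add: x_def)
  have "U x = y" using assms x0 by (simp add: U_def x_def)
  hence "Uinv y = x" unfolding Uinv_def using the_inv_into_f_f[OF U_inj] by auto
  thus ?thesis using x0 by simp
qed

lemma U_bound: assumes "0 < c" "c \<le> 1" shows "\<bar>U x\<bar> \<le> exp (- c * x) / c"
proof (cases "0 \<le> x")
  case True
  have "exp (-x) \<le> exp (- c * x)" using True assms by (simp add: mult_left_le_one_le)
  also have "\<dots> \<le> exp (- c * x) / c" using assms by (simp add: le_divide_eq mult_left_le_one_le)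
  finally show ?thesis using True by (simp add: U_def)
next
  case False
  have "1 + (-c*x) \<le> exp (-c*x)" by (rule exp_ge_add_one_self)
  moreover have "c * (1 - x) = c + (- c * x)" by (simp add: algebra_simps)
  ultimately have "c * (1 - x) \<le> exp (-c*x)" using assms by linarith
  thus ?thesis using False assms by (simp add: U_def le_divide_eq mult.commute)
qed

lemma normal_mgf_eq: "normal_density m 1 x * exp (- s * x) = exp (- s * m + s^2/2) * normal_density (m - s) 1 x"
proof -
  have e: "exp (-(x - m)\<^sup>2/ (2 * 1\<^sup>2)) * exp (- s * x) = exp (- s * m + s^2/2) * exp (-(x - (m - s))\<^sup>2/ (2 * 1\<^sup>2))"
    unfolding exp_add[symmetric] by (rule arg_cong[where f=exp]) (simp add: power2_eq_square field_simps)
  show ?thesis unfolding normal_density_def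
    using arg_cong[OF e, of "\<lambda>z. 1 / sqrt (2 * pi * 1\<^sup>2) * z"] by (simp only: mult_ac)
qed


lemma U_meas[measurable]: "U \<in> borel_measurable borel"
  unfolding U_def[abs_def] by measurable

lemma exp_lt1: fixes s d :: real assumes "0 < s" "s \<le> d" shows "exp (s * (s/2 - d)) < 1"
proof -
  have "s * (s/2 - d) < 0" using assms by (intro mult_pos_neg) auto
  thus ?thesis by simp
qed

theorem mainTheorem7:
  fixes M :: "'a measure" and r :: "nat \<Rightarrow> 'a \<Rightarrow> real" and lam m :: real
  assumes "prob_space M"
    and "m > lam"
    and "prob_space.indep_vars M (\<lambda>_. borel) r UNIV"
    and "\<And>t. distributed M lborel (r t) (normal_density m 1)"
  defines "S \<equiv> (\<lambda>T \<omega>. \<Sum>t\<in>{1..T}. (r t \<omega> - lam))"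
  shows "(\<forall>\<gamma>>0. (\<lambda>T. prob_space.expectation M (\<lambda>\<omega>. U (\<gamma> * S T \<omega>))) \<longlonglongrightarrow> 0)
         \<and> liminf (\<lambda>T. alpha M (S T)) = \<infinity>"
proof -
  interpret prob_space M by fact
  note indep = assms(3)
  note distr = assms(4)
  define d where "d = m - lam"
  have d0: "0 < d" using assms(2) by (simp add: d_def)
  have rv[measurable]: "random_variable borel (r t)" for t
    using indep unfolding indep_vars_def2 by simp
  have S_meas[measurable]: "S T \<in> borel_measurable M" for T
    unfolding S_def by measurable
  have single: "integrable M (\<lambda>\<omega>. exp (- s * (r t \<omega> - lam)))
      \<and> expectation (\<lambda>\<omega>. exp (- s * (r t \<omega> - lam))) = exp (s * (s/2 - d))" for s t
  proof -
    have eq: "normal_density m 1 x * exp (- s * (x - lam)) =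
        (exp (s * lam) * exp (- s * m + s^2/2)) * normal_density (m - s) 1 x" for x
    proof -
      have "exp (- s * (x - lam)) = exp (s * lam) * exp (- s * x)"
        by (simp add: exp_add[symmetric] algebra_simps)
      thus ?thesis using normal_mgf_eq[of m x s] by (simp add: mult_ac)
    qed
    have i1: "integrable lborel (\<lambda>x. normal_density m 1 x * exp (- s * (x - lam)))"
      unfolding eq by (intro integrable_mult_right) simp
    have "integrable M (\<lambda>\<omega>. exp (- s * (r t \<omega> - lam)))"
      using distributed_integrable[OF distr[of t], of "\<lambda>x. exp (- s * (x - lam))"] i1 by simp
    moreover have "expectation (\<lambda>\<omega>. exp (- s * (r t \<omega> - lam))) =
        (\<integral>x. normal_density m 1 x * exp (- s * (x - lam)) \<partial>lborel)"
      using distributed_integral[OF distr[of t], of "\<lambda>x. exp (- s * (x - lam))"] by simp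
    moreover have "\<dots> = exp (s * lam) * exp (- s * m + s^2/2)"
      unfolding eq by simp
    moreover have "\<dots> = exp (s * (s/2 - d))"
      by (simp add: exp_add[symmetric] d_def power2_eq_square algebra_simps)
    ultimately show ?thesis by simp
  qed
  have mgf: "integrable M (\<lambda>\<omega>. exp (- s * S T \<omega>))
      \<and> expectation (\<lambda>\<omega>. exp (- s * S T \<omega>)) = exp (s * (s/2 - d)) ^ T" for s T
  proof -
    have prod: "exp (- s * S T \<omega>) = (\<Prod>t\<in>{1..T}. exp (- s * (r t \<omega> - lam)))" for \<omega>
      unfolding S_def by (simp add: exp_sum[symmetric] sum_distrib_left sum_negf)
    have ind: "indep_vars (\<lambda>_. borel) (\<lambda>t \<omega>. exp (- s * (r t \<omega> - lam))) {1..T}"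
      by (rule indep_vars_subset[OF indep_vars_compose2[OF indep, where Y="\<lambda>t x. exp (- s * (x - lam))"]]) auto
    have "integrable M (\<lambda>\<omega>. exp (- s * S T \<omega>))"
      unfolding prod by (rule indep_vars_integrable[OF _ ind]) (use single in auto)
    moreover have "expectation (\<lambda>\<omega>. exp (- s * S T \<omega>)) = exp (s * (s/2 - d)) ^ T"
      unfolding prod by (subst indep_vars_lebesgue_integral[OF _ ind]) (use single in auto)
    ultimately show ?thesis by simp
  qed
  have part1: "(\<lambda>T. expectation (\<lambda>\<omega>. U (\<gamma> * S T \<omega>))) \<longlonglongrightarrow> 0"
    and intU: "integrable M (\<lambda>\<omega>. U (\<gamma> * S T \<omega>))" if g0: "0 < \<gamma>" for \<gamma> T
  proof -
    define s where "s = min \<gamma> d"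
    define c where "c = s / \<gamma>"
    have s0: "0 < s" "s \<le> d" using g0 d0 by (auto simp: s_def)
    have c0: "0 < c" "c \<le> 1" using g0 s0 by (auto simp: c_def s_def)
    have cg: "c * \<gamma> = s" using g0 by (simp add: c_def)
    have bnd: "\<bar>U (\<gamma> * S T \<omega>)\<bar> \<le> exp (- s * S T \<omega>) / c" for T \<omega>
      using U_bound[OF c0, of "\<gamma> * S T \<omega>"] cg by (simp add: mult.assoc[symmetric])
    have intE: "integrable M (\<lambda>\<omega>. exp (- s * S T \<omega>) / c)" for T
      using mgf[of s T] by simp
    have intU': "integrable M (\<lambda>\<omega>. U (\<gamma> * S T \<omega>))" for T
    proof (rule Bochner_Integration.integrable_bound[OF intE[of T]])
      show "(\<lambda>\<omega>. U (\<gamma> * S T \<omega>)) \<in> borel_measurable M" by measurable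
      have "norm (U (\<gamma> * S T x)) \<le> norm (exp (- s * S T x) / c)" for x
      proof -
        have "norm (exp (- s * S T x) / c) = exp (- s * S T x) / c" using c0 by simp
        thus ?thesis using bnd[of T x] by simp
      qed
      thus "AE x in M. norm (U (\<gamma> * S T x)) \<le> norm (exp (- s * S T x) / c)" by simp
    qed
    show "integrable M (\<lambda>\<omega>. U (\<gamma> * S T \<omega>))" by (rule intU')
    have nb: "norm (expectation (\<lambda>\<omega>. U (\<gamma> * S T \<omega>))) \<le> exp (s * (s/2 - d)) ^ T / c" for T
    proof -
      have "norm (expectation (\<lambda>\<omega>. U (\<gamma> * S T \<omega>))) \<le> expectation (\<lambda>\<omega>. \<bar>U (\<gamma> * S T \<omega>)\<bar>)"
        using integral_abs_bound by simp
      also have "\<dots> \<le> expectation (\<lambda>\<omega>. exp (- s * S T \<omega>) / c)"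
        by (rule integral_mono) (use intU' intE bnd in auto)
      also have "\<dots> = exp (s * (s/2 - d)) ^ T / c"
        using mgf[of s T] by simp
      finally show ?thesis .
    qed
    have lim0: "(\<lambda>T. exp (s * (s/2 - d)) ^ T / c) \<longlonglongrightarrow> 0"
      using exp_lt1[OF s0] by (intro tendsto_divide_zero LIMSEQ_power_zero) auto
    have ev: "\<forall>\<^sub>F T in sequentially. norm (expectation (\<lambda>\<omega>. U (\<gamma> * S T \<omega>))) \<le> exp (s * (s/2 - d)) ^ T / c"
      using nb by (intro always_eventually) blast
    show "(\<lambda>T. expectation (\<lambda>\<omega>. U (\<gamma> * S T \<omega>))) \<longlonglongrightarrow> 0"
      by (rule Lim_null_comparison[OF ev lim0])
  qed
  have Eneg: "expectation (\<lambda>\<omega>. U (\<gamma> * S T \<omega>)) < 0" if "0 < \<gamma>" for \<gamma> T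
  proof -
    have i: "integrable M (\<lambda>\<omega>. - U (\<gamma> * S T \<omega>))" using intU[OF that] by simp
    have "expectation (\<lambda>\<omega>. - U (\<gamma> * S T \<omega>)) \<noteq> 0"
    proof
      assume "expectation (\<lambda>\<omega>. - U (\<gamma> * S T \<omega>)) = 0"
      hence "AE \<omega> in M. - U (\<gamma> * S T \<omega>) = 0"
        using integral_nonneg_eq_0_iff_AE[OF i] U_neg by (simp add: less_imp_le)
      hence "AE \<omega> in M. False"
        by eventually_elim (metis U_neg neg_equal_0_iff_equal less_irrefl)
      thus False by simp
    qed
    moreover have "0 \<le> expectation (\<lambda>\<omega>. - U (\<gamma> * S T \<omega>))"
      using U_neg by (intro integral_nonneg_AE) (auto simp: less_imp_le)
    ultimately show ?thesis by simp
  qed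
  have part2: "liminf (\<lambda>T. alpha M (S T)) = \<infinity>"
    unfolding liminf_PInfty[symmetric] tendsto_PInfty
  proof
    fix R :: real
    define g where "g = max 1 (R + 1)"
    have g0: "0 < g" "R < g" by (auto simp: g_def)
    have "eventually (\<lambda>T. -1 < expectation (\<lambda>\<omega>. U (g * S T \<omega>))) sequentially"
      using part1[OF g0(1)] by (rule order_tendstoD) simp
    thus "eventually (\<lambda>T. ereal R < alpha M (S T)) sequentially"
    proof eventually_elim
      case (elim T)
      let ?E = "expectation (\<lambda>\<omega>. U (g * S T \<omega>))"
      have "0 \<le> Uinv ?E" using elim Eneg[OF g0(1), of T] by (intro Uinv_nonneg) auto
      hence "mu M g (S T) \<le> 0" using g0 unfolding mu_def by simp
      hence mem: "g \<in> {\<gamma>. 0 < \<gamma> \<and> mu M \<gamma> (S T) \<le> 0}" using g0 by simp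
      have ne: "{\<gamma>. 0 < \<gamma> \<and> mu M \<gamma> (S T) \<le> 0} \<noteq> {}" using mem by blast
      have "ereal g \<in> ereal ` {\<gamma>. 0 < \<gamma> \<and> mu M \<gamma> (S T) \<le> 0}" using mem by blast
      hence "ereal g \<le> Sup (ereal ` {\<gamma>. 0 < \<gamma> \<and> mu M \<gamma> (S T) \<le> 0})" by (rule Sup_upper)
      moreover have "alpha M (S T) = Sup (ereal ` {\<gamma>. 0 < \<gamma> \<and> mu M \<gamma> (S T) \<le> 0})"
        unfolding alpha_def by (rule if_not_P[OF ne])
      ultimately have le: "ereal g \<le> alpha M (S T)" by simp
      have "ereal R < ereal g" using g0 by simp
      thus ?case using le by (rule less_le_trans)
    qed
  qed
  show ?thesis using part1 part2 by blast
qed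

end
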